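(* Let $(E,\rho)$ be a weighted space and $P:\mathscr{B}^\rho(E)\to\mathscr{B}^\rho(E)$ a map. Then $P$ is a smooth operator algebra homomorphism if and only if there is a map $\psi:E\to E$ such that the restriction $\psi|_{K_R}:K_R\to E$ is continuous for every $R>0$, $\sup_{x\in E}\rho(\psi(x))/\rho(x)<\infty$, and $Pf=f\circ\psi$ for all $f\in\mathscr{B}^\rho(E)$. The map $\psi$ is uniquely determined by $P$.
   Context: A weighted space is a pair $(E,\rho)$ where $E$ is a completely regular Hausdorff topological space and $\rho:E\to(0,\infty)$ is an admissible weight function, meaning that for every $R\ge 0$ the sublevel set $K_R:=\{x\in E:\rho(x)\le R\}$ is compact. For $f:E\to\mathbb{R}$ put $\|f\|_\rho:=\sup_{x\in E}|f(x)|/\rho(x)$; $\mathscr{B}^\rho(E)$ denotes the closure of $C_b(E)$ with respect to $\|\cdot\|_\rho$ inside $\{f:E\to\mathbb{R}:\|f\|_\rho<\infty\}$. A continuous linear map $P:\mathscr{B}^\rho(E)\to\mathscr{B}^\rho(E)$ is a smooth operator algebra homomorphism if for every $n$, every bounded smooth $\phi:\mathbb{R}^n\to\mathbb{R}$ and all $f_1,\dots,f_n\in\mathscr{B}^\rho(E)$ one has $P(\phi(f_1(\cdot),\dots,f_n(\cdot)))=\phi(Pf_1(\cdot),\dots,Pf_n(\cdot))$. *)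

theory Defs
  imports "HOL-Analysis.Analysis"
begin

text \<open>The space E is the type 'a with its topology (euclidean :: 'a topology).
  Admissible weight: strictly positive with compact sublevel sets.\<close>

definition admissible_weight :: "('a::topological_space \<Rightarrow> real) \<Rightarrow> bool" where
  "admissible_weight \<rho> \<longleftrightarrow> (\<forall>x. \<rho> x > 0) \<and> (\<forall>R\<ge>0. compact {x. \<rho> x \<le> R})"

definition sublevel :: "('a \<Rightarrow> real) \<Rightarrow> real \<Rightarrow> 'a set" where
  "sublevel \<rho> R = {x. \<rho> x \<le> R}"

definition wfinite :: "('a \<Rightarrow> real) \<Rightarrow> ('a \<Rightarrow> real) \<Rightarrow> bool" where
  "wfinite \<rho> f \<longleftrightarrow> bdd_above (range (\<lambda>x. \<bar>f x\<bar> / \<rho> x))"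

definition wnorm :: "('a \<Rightarrow> real) \<Rightarrow> ('a \<Rightarrow> real) \<Rightarrow> real" where
  "wnorm \<rho> f = (SUP x. \<bar>f x\<bar> / \<rho> x)"

text \<open>B^rho(E): closure of C_b(E) w.r.t. the weighted norm inside the space of
  functions of finite weighted norm.\<close>
definition Brho :: "('a::topological_space \<Rightarrow> real) \<Rightarrow> ('a \<Rightarrow> real) set" where
  "Brho \<rho> = {f. wfinite \<rho> f \<and>
     (\<forall>\<epsilon>>0. \<exists>g. continuous_on UNIV g \<and> bounded (range g) \<and>
        wfinite \<rho> (\<lambda>x. f x - g x) \<and> wnorm \<rho> (\<lambda>x. f x - g x) < \<epsilon>)}"

text \<open>R^n is encoded as the vectors nat => real vanishing at indices >= n
  (product topology on nat => real restricts to the Euclidean topology there).\<close>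
definition Rn :: "nat \<Rightarrow> (nat \<Rightarrow> real) set" where
  "Rn n = {x. \<forall>i\<ge>n. x i = 0}"

fun iter_partial :: "nat list \<Rightarrow> ((nat \<Rightarrow> real) \<Rightarrow> real) \<Rightarrow> (nat \<Rightarrow> real) \<Rightarrow> real" where
  "iter_partial [] \<phi> = \<phi>"
| "iter_partial (i # is) \<phi> = (\<lambda>x. deriv (\<lambda>t. iter_partial is \<phi> (x(i := x i + t))) 0)"

definition smooth_Rn :: "nat \<Rightarrow> ((nat \<Rightarrow> real) \<Rightarrow> real) \<Rightarrow> bool" where
  "smooth_Rn n \<phi> \<longleftrightarrow>
     (\<forall>is. set is \<subseteq> {..<n} \<longrightarrow>
        continuous_on (Rn n) (iter_partial is \<phi>) \<and>
        (\<forall>i<n. \<forall>x\<in>Rn n. (\<lambda>t. iter_partial is \<phi> (x(i := x i + t))) differentiable (at 0)))"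

definition vec_of :: "nat \<Rightarrow> (nat \<Rightarrow> real) \<Rightarrow> (nat \<Rightarrow> real)" where
  "vec_of n v = (\<lambda>i. if i < n then v i else 0)"

definition smooth_op_alg_hom ::
  "('a::topological_space \<Rightarrow> real) \<Rightarrow> (('a \<Rightarrow> real) \<Rightarrow> ('a \<Rightarrow> real)) \<Rightarrow> bool" where
  "smooth_op_alg_hom \<rho> P \<longleftrightarrow>
     (\<forall>f\<in>Brho \<rho>. P f \<in> Brho \<rho>) \<and>
     (\<forall>f\<in>Brho \<rho>. \<forall>g\<in>Brho \<rho>. \<forall>a b::real.
        P (\<lambda>x. a * f x + b * g x) = (\<lambda>x. a * P f x + b * P g x)) \<and>
     (\<forall>f\<in>Brho \<rho>. \<forall>\<epsilon>>0. \<exists>\<delta>>0. \<forall>g\<in>Brho \<rho>.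
        wnorm \<rho> (\<lambda>x. g x - f x) < \<delta> \<longrightarrow> wnorm \<rho> (\<lambda>x. P g x - P f x) < \<epsilon>) \<and>
     (\<forall>n \<phi> fs. smooth_Rn n \<phi> \<and> bounded (\<phi> ` Rn n) \<and> (\<forall>i<n. fs i \<in> Brho \<rho>) \<longrightarrow>
        P (\<lambda>x. \<phi> (vec_of n (\<lambda>i. fs i x))) = (\<lambda>x. \<phi> (vec_of n (\<lambda>i. P (fs i) x))))"

definition composition_rep ::
  "('a::topological_space \<Rightarrow> real) \<Rightarrow> (('a \<Rightarrow> real) \<Rightarrow> ('a \<Rightarrow> real)) \<Rightarrow> ('a \<Rightarrow> 'a) \<Rightarrow> bool" where
  "composition_rep \<rho> P \<psi> \<longleftrightarrow>
     (\<forall>R>0. continuous_on (sublevel \<rho> R) \<psi>) \<and>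
     bdd_above (range (\<lambda>x. \<rho> (\<psi> x) / \<rho> x)) \<and>
     (\<forall>f\<in>Brho \<rho>. P f = f \<circ> \<psi>)"

end

theory Submission
  imports Defs
begin


inductive_set Ctrig :: "(real \<Rightarrow> real) set" where
  Cc: "(\<lambda>t. c) \<in> Ctrig"
| Cs: "(\<lambda>t. sin (a * t + b)) \<in> Ctrig"
| Cadd: "f \<in> Ctrig \<Longrightarrow> g \<in> Ctrig \<Longrightarrow> (\<lambda>t. f t + g t) \<in> Ctrig"
| Cmul: "f \<in> Ctrig \<Longrightarrow> g \<in> Ctrig \<Longrightarrow> (\<lambda>t. f t * g t) \<in> Ctrig"

lemma Ctrig_deriv: "f \<in> Ctrig \<Longrightarrow> \<exists>f'\<in>Ctrig. \<forall>t. (f has_real_derivative f' t) (at t)"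
proof (induction rule: Ctrig.induct)
  case (Cc c)
  show ?case by (rule bexI[of _ "\<lambda>t. 0"]) (auto intro: Ctrig.Cc)
next
  case (Cs a b)
  have "\<forall>t. ((\<lambda>t. sin (a * t + b)) has_real_derivative (a * sin (a * t + (b + pi/2)))) (at t)"
  proof
    fix t
    have "((\<lambda>t. sin (a * t + b)) has_real_derivative (cos (a * t + b) * (a * 1 + 0))) (at t)"
      by (intro derivative_eq_intros) auto
    moreover have "sin (a * t + (b + pi/2)) = cos (a * t + b)"
      by (simp add: sin_add add.assoc[symmetric])
    ultimately show "((\<lambda>t. sin (a * t + b)) has_real_derivative (a * sin (a * t + (b + pi/2)))) (at t)"
      by (simp add: mult.commute)
  qed
  moreover have "(\<lambda>t. a * sin (a * t + (b + pi/2))) \<in> Ctrig"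
    using Ctrig.Cmul[OF Ctrig.Cc[of a] Ctrig.Cs[of a "b + pi/2"]] by simp
  ultimately show ?case by (intro bexI[of _ "\<lambda>t. a * sin (a * t + (b + pi/2))"])
next
  case (Cadd f g)
  then obtain f' g' where "f' \<in> Ctrig" "g' \<in> Ctrig" "\<forall>t. (f has_real_derivative f' t) (at t)"
    "\<forall>t. (g has_real_derivative g' t) (at t)" by blast
  thus ?case by (intro bexI[of _ "\<lambda>t. f' t + g' t"] allI DERIV_add Ctrig.Cadd) auto
next
  case (Cmul f g)
  then obtain f' g' where d: "f' \<in> Ctrig" "g' \<in> Ctrig" "\<forall>t. (f has_real_derivative f' t) (at t)"
    "\<forall>t. (g has_real_derivative g' t) (at t)" by blast
  have "(\<lambda>t. f' t * g t + f t * g' t) \<in> Ctrig"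
    using d(1,2) Cmul.hyps by (intro Ctrig.Cadd Ctrig.Cmul)
  moreover have "\<forall>t. ((\<lambda>t. f t * g t) has_real_derivative (f' t * g t + f t * g' t)) (at t)"
    using d(3,4) by (auto intro!: derivative_eq_intros)
  ultimately show ?case by (intro bexI[of _ "\<lambda>t. f' t * g t + f t * g' t"])
qed

lemma Ctrig_bounded: "f \<in> Ctrig \<Longrightarrow> \<exists>M\<ge>0. \<forall>t. \<bar>f t\<bar> \<le> M"
proof (induction rule: Ctrig.induct)
  case (Cc c)
  then show ?case by (intro exI[of _ "\<bar>c\<bar>"]) auto
next
  case (Cs a b)
  then show ?case by (intro exI[of _ 1]) auto
next
  case (Cadd f g)
  then obtain M1 M2 where "M1 \<ge> 0" "M2 \<ge> 0" "\<forall>t. \<bar>f t\<bar> \<le> M1" "\<forall>t. \<bar>g t\<bar> \<le> M2" by blast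
  thus ?case by (intro exI[of _ "M1 + M2"]) (auto intro: order_trans[OF abs_triangle_ineq] add_mono)
next
  case (Cmul f g)
  then obtain M1 M2 where M: "M1 \<ge> 0" "M2 \<ge> 0" "\<forall>t. \<bar>f t\<bar> \<le> M1" "\<forall>t. \<bar>g t\<bar> \<le> M2" by blast
  have "\<forall>t. \<bar>f t * g t\<bar> \<le> M1 * M2"
    using M by (auto simp: abs_mult intro: mult_mono)
  thus ?case using M by (intro exI[of _ "M1 * M2"]) auto
qed

lemma Ctrig_cont: "f \<in> Ctrig \<Longrightarrow> continuous_on UNIV f"
  using Ctrig_deriv by (meson DERIV_isCont continuous_at_imp_continuous_on)

lemma Ctrig_lip: "f \<in> Ctrig \<Longrightarrow> \<exists>K\<ge>0. \<forall>s t. \<bar>f s - f t\<bar> \<le> K * \<bar>s - t\<bar>"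
proof -
  assume "f \<in> Ctrig"
  then obtain f' where f': "f' \<in> Ctrig" "\<forall>t. (f has_real_derivative f' t) (at t)"
    using Ctrig_deriv by blast
  obtain K where K: "K \<ge> 0" "\<forall>t. \<bar>f' t\<bar> \<le> K" using Ctrig_bounded[OF f'(1)] by blast
  have *: "\<bar>f s - f t\<bar> \<le> K * \<bar>s - t\<bar>" if "t < s" for s t
  proof -
    have "\<exists>z. t < z \<and> z < s \<and> f s - f t = (s - t) * f' z"
      by (rule MVT2[OF that]) (use f'(2) in blast)
    then obtain z where "f s - f t = (s - t) * f' z" by blast
    hence "\<bar>f s - f t\<bar> = \<bar>s - t\<bar> * \<bar>f' z\<bar>" by (simp add: abs_mult)
    also have "\<dots> \<le> \<bar>s - t\<bar> * K" using K by (intro mult_left_mono) auto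
    finally show ?thesis by (simp add: mult.commute)
  qed
  have "\<bar>f s - f t\<bar> \<le> K * \<bar>s - t\<bar>" for s t
  proof (cases s t rule: linorder_cases)
    case less
    then show ?thesis using *[OF less] by (simp add: abs_minus_commute)
  next
    case equal
    then show ?thesis by simp
  next
    case greater
    then show ?thesis using *[OF greater] by simp
  qed
  thus ?thesis using K by blast
qed

lemma Ctrig_pow: "f \<in> Ctrig \<Longrightarrow> (\<lambda>t. f t ^ n) \<in> Ctrig"
  by (induction n) (auto intro: Ctrig.Cc Ctrig.Cmul)

lemma iter_Ctrig:
  "set is \<subseteq> {..<1} \<Longrightarrow> g \<in> Ctrig \<Longrightarrow> \<exists>h\<in>Ctrig. iter_partial is (\<lambda>x. g (x 0)) = (\<lambda>x. h (x 0))"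
proof (induction "is")
  case Nil
  then show ?case by auto
next
  case (Cons i "is")
  then obtain h where h: "h \<in> Ctrig" "iter_partial is (\<lambda>x. g (x 0)) = (\<lambda>x. h (x 0))" by auto
  have i: "i = 0" using Cons.prems by auto
  obtain h' where h': "h' \<in> Ctrig" "\<forall>t. (h has_real_derivative h' t) (at t)"
    using Ctrig_deriv[OF h(1)] by blast
  have "iter_partial (i # is) (\<lambda>x. g (x 0)) = (\<lambda>x. h' (x 0))"
  proof
    fix x :: "nat \<Rightarrow> real"
    have "((\<lambda>t. h (t + x 0)) has_real_derivative h' (x 0)) (at 0)"
      using DERIV_shift[of h "h' (x 0)" 0 "x 0"] h'(2) by simp
    hence "deriv (\<lambda>t. h (t + x 0)) 0 = h' (x 0)" by (rule DERIV_imp_deriv)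
    thus "iter_partial (i # is) (\<lambda>x. g (x 0)) x = h' (x 0)"
      using i h(2) by (simp add: add.commute)
  qed
  thus ?case using h'(1) by blast
qed

lemma smooth_Ctrig:
  assumes g: "g \<in> Ctrig"
  shows "smooth_Rn 1 (\<lambda>x. g (x 0))" "bounded ((\<lambda>x. g (x 0)) ` Rn 1)"
proof -
  show "smooth_Rn 1 (\<lambda>x. g (x 0))"
    unfolding smooth_Rn_def
  proof (intro allI impI conjI ballI)
    fix "is" :: "nat list" assume "set is \<subseteq> {..<1}"
    then obtain h where h: "h \<in> Ctrig" "iter_partial is (\<lambda>x. g (x 0)) = (\<lambda>x. h (x 0))"
      using iter_Ctrig g by blast
    have "continuous_on UNIV (\<lambda>x::nat\<Rightarrow>real. h (x 0))"
      using continuous_on_compose[OF continuous_on_product_coordinates[of 0] continuous_on_subset[OF Ctrig_cont[OF h(1)]]]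
      by (simp add: o_def)
    thus "continuous_on (Rn 1) (iter_partial is (\<lambda>x. g (x 0)))"
      using h(2) continuous_on_subset by fastforce
    fix i x assume "i < (1::nat)" "x \<in> Rn 1"
    hence i: "i = 0" by simp
    obtain h' where h': "\<forall>t. (h has_real_derivative h' t) (at t)"
      using Ctrig_deriv[OF h(1)] by blast
    have "((\<lambda>t. h (t + x 0)) has_real_derivative h' (x 0)) (at 0)"
      using DERIV_shift[of h "h' (x 0)" 0 "x 0"] h' by simp
    hence "(\<lambda>t. h (t + x 0)) differentiable (at 0)"
      unfolding differentiable_def has_field_derivative_def by blast
    thus "(\<lambda>t. iter_partial is (\<lambda>x. g (x 0)) (x(i := x i + t))) differentiable (at 0)"
      using h(2) i by (simp add: add.commute)
  qed
  obtain M where "\<forall>t. \<bar>g t\<bar> \<le> M" using Ctrig_bounded[OF g] by blast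
  thus "bounded ((\<lambda>x. g (x 0)) ` Rn 1)" unfolding bounded_iff by auto
qed


lemma dist_Rn:
  fixes u v :: "nat \<Rightarrow> real"
  assumes u: "u \<in> Rn n" and v: "v \<in> Rn n" and t: "t \<ge> 0"
    and c: "\<And>i. i < n \<Longrightarrow> \<bar>u i - v i\<bar> \<le> t"
  shows "dist u v \<le> 2 * t"
proof -
  have coord: "dist (u j) (v j) \<le> t" for j
  proof (cases "j < n")
    case True
    then show ?thesis using c[OF True] by (simp add: dist_real_def)
  next
    case False
    then show ?thesis using u v t by (simp add: Rn_def)
  qed
  have N: "dist u v \<le> 2 * t + (1/2)^N" for N
  proof -
    let ?A = "{dist (u (from_nat k)) (v (from_nat k)) |k. k \<le> N}"
    have fin: "finite ?A" by (rule finite_image_set) simp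
    have ne: "?A \<noteq> {}" by blast
    have "Max ?A \<le> t" using fin ne coord by (auto simp: Max_le_iff)
    thus ?thesis using dist_fun_le_dist_first_terms[of u v N] by linarith
  qed
  show ?thesis
  proof (rule ccontr)
    assume "\<not> ?thesis"
    hence "dist u v - 2 * t > 0" by simp
    then obtain N where "(1/2::real)^N < dist u v - 2 * t"
      using real_arch_pow_inv[of "dist u v - 2 * t" "1/2"] by auto
    thus False using N[of N] by linarith
  qed
qed

lemma compact_box: "compact {v::nat \<Rightarrow> real. (\<forall>i<n. \<bar>v i\<bar> \<le> c) \<and> (\<forall>i\<ge>n. v i = 0)}"
proof -
  define S where "S i = (if i < n then {-c..c} else {0::real})" for i
  have eq: "{v::nat \<Rightarrow> real. (\<forall>i<n. \<bar>v i\<bar> \<le> c) \<and> (\<forall>i\<ge>n. v i = 0)} = Pi\<^sub>E UNIV S"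
  proof (intro set_eqI iffI)
    fix v assume v: "v \<in> {v::nat \<Rightarrow> real. (\<forall>i<n. \<bar>v i\<bar> \<le> c) \<and> (\<forall>i\<ge>n. v i = 0)}"
    show "v \<in> Pi\<^sub>E UNIV S" unfolding PiE_UNIV_domain
    proof (rule Pi_I)
      fix i
      show "v i \<in> S i"
      proof (cases "i < n")
        case True
        hence "\<bar>v i\<bar> \<le> c" using v by blast
        then show ?thesis using True unfolding S_def by (simp add: abs_le_iff)
      next
        case False
        then show ?thesis using v unfolding S_def by simp
      qed
    qed
  next
    fix v assume "v \<in> Pi\<^sub>E UNIV S"
    hence v: "\<And>i. v i \<in> S i" unfolding PiE_UNIV_domain by blast
    have "\<bar>v i\<bar> \<le> c" if "i < n" for i using v[of i] that unfolding S_def by (simp add: abs_le_iff)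
    moreover have "v i = 0" if "i \<ge> n" for i using v[of i] that unfolding S_def by simp
    ultimately show "v \<in> {v::nat \<Rightarrow> real. (\<forall>i<n. \<bar>v i\<bar> \<le> c) \<and> (\<forall>i\<ge>n. v i = 0)}" by blast
  qed
  have "compactin (product_topology (\<lambda>i. euclidean) UNIV) (Pi\<^sub>E UNIV S)"
    unfolding compactin_PiE by (auto simp: S_def)
  thus ?thesis unfolding eq euclidean_product_topology by simp
qed

lemma vec_of_Rn: "vec_of n w \<in> Rn n"
  by (simp add: vec_of_def Rn_def)

locale wsp =
  fixes \<rho> :: "'a::topological_space \<Rightarrow> real"
  assumes haus: "Hausdorff_space (euclidean :: 'a topology)"
    and adm: "admissible_weight \<rho>"
begin

lemma rho_pos: "\<rho> x > 0"
  using adm by (simp add: admissible_weight_def)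

lemma compact_K: "R \<ge> 0 \<Longrightarrow> compact {x. \<rho> x \<le> R}"
  using adm by (simp add: admissible_weight_def)

lemma closed_K: "R \<ge> 0 \<Longrightarrow> closed {x. \<rho> x \<le> R}"
proof -
  assume "R \<ge> 0"
  hence "compactin euclidean {x. \<rho> x \<le> R}" using compact_K by simp
  hence "closedin euclidean {x. \<rho> x \<le> R}" by (rule compactin_imp_closedin[OF haus])
  thus ?thesis by (metis closed_closedin)
qed

lemma rho_min: "\<exists>m>0. \<forall>x. m \<le> \<rho> x"
proof -
  let ?U = "\<lambda>k::nat. - {x. \<rho> x \<le> 1 / Suc k}"
  have "compact {x. \<rho> x \<le> 1}" by (rule compact_K) simp
  moreover have "\<And>k. k \<in> UNIV \<Longrightarrow> open (?U k)" using closed_K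
    by (simp add: open_Compl)
  moreover have "{x. \<rho> x \<le> 1} \<subseteq> (\<Union>k\<in>UNIV. ?U k)"
  proof
    fix x assume "x \<in> {x. \<rho> x \<le> 1}"
    obtain k where "inverse (real (Suc k)) < \<rho> x"
      using reals_Archimedean rho_pos[of x] by blast
    hence "1 / Suc k < \<rho> x" by (simp add: inverse_eq_divide)
    hence "x \<in> ?U k" by simp
    thus "x \<in> (\<Union>k\<in>UNIV. ?U k)" by blast
  qed
  ultimately obtain C' where C': "finite C'" "{x. \<rho> x \<le> 1} \<subseteq> (\<Union>k\<in>C'. ?U k)"
    by (rule compactE_image) blast+
  define N where "N = Max (insert 0 C')"
  have "\<forall>x. 1 / Suc N \<le> \<rho> x"
  proof
    fix x
    show "1 / Suc N \<le> \<rho> x"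
    proof (cases "\<rho> x \<le> 1")
      case True
      then obtain k where k0: "k \<in> C'" "x \<in> ?U k" using C' by blast
      hence k: "k \<in> C'" "\<rho> x > 1 / Suc k" by auto
      have "k \<le> N" unfolding N_def using k C' by simp
      hence "1 / real (Suc N) \<le> 1 / Suc k" by (simp add: frac_le)
      thus ?thesis using k by linarith
    next
      case False
      have "1 / real (Suc N) \<le> 1" by simp
      thus ?thesis using False by linarith
    qed
  qed
  thus ?thesis by (intro exI[of _ "1 / Suc N"]) auto
qed

definition "rmin = (SOME m. m > 0 \<and> (\<forall>x. m \<le> \<rho> x))"

lemma rmin: "rmin > 0" "rmin \<le> \<rho> x"
  using someI_ex[OF rho_min] unfolding rmin_def by auto

lemma wnorm_le: "wfinite \<rho> f \<Longrightarrow> \<bar>f z\<bar> \<le> wnorm \<rho> f * \<rho> z"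
proof -
  assume "wfinite \<rho> f"
  hence "\<bar>f z\<bar> / \<rho> z \<le> wnorm \<rho> f"
    unfolding wfinite_def wnorm_def by (intro cSUP_upper) auto
  thus ?thesis using rho_pos[of z] by (simp add: divide_le_eq)
qed

lemma wnorm_bound:
  assumes "\<And>z. \<bar>f z\<bar> \<le> c * \<rho> z"
  shows "wfinite \<rho> f" "wnorm \<rho> f \<le> c"
proof -
  have b: "\<And>z. \<bar>f z\<bar> / \<rho> z \<le> c" using assms rho_pos by (simp add: divide_le_eq)
  thus "wfinite \<rho> f" unfolding wfinite_def by (auto intro!: bdd_aboveI)
  show "wnorm \<rho> f \<le> c" unfolding wnorm_def using b by (intro cSUP_least) auto
qed

lemma wnorm_nonneg: "wfinite \<rho> f \<Longrightarrow> wnorm \<rho> f \<ge> 0"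
proof -
  assume "wfinite \<rho> f"
  hence "\<bar>f undefined\<bar> / \<rho> undefined \<le> wnorm \<rho> f"
    unfolding wfinite_def wnorm_def by (intro cSUP_upper) auto
  moreover have "\<bar>f undefined\<bar> / \<rho> undefined \<ge> 0" using rho_pos[of undefined] by simp
  ultimately show ?thesis by linarith
qed

lemma bounded_wfinite:
  assumes "\<And>z. \<bar>f z\<bar> \<le> B"
  shows "wfinite \<rho> f"
proof (rule wnorm_bound(1))
  fix z
  have "B \<ge> 0" using assms[of z] by linarith
  have "B = (B / rmin) * rmin" using rmin by simp
  also have "\<dots> \<le> (B / rmin) * \<rho> z" using rmin \<open>B\<ge>0\<close> by (intro mult_left_mono) auto
  finally show "\<bar>f z\<bar> \<le> B / rmin * \<rho> z" using assms[of z] by linarith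
qed

lemma Cb_Brho:
  assumes "continuous_on UNIV f" "\<And>z. \<bar>f z\<bar> \<le> B"
  shows "f \<in> Brho \<rho>"
proof -
  have b: "bounded (range f)" using assms(2) unfolding bounded_iff by (intro exI[of _ B]) auto
  have w: "wfinite \<rho> f" by (rule bounded_wfinite[OF assms(2)])
  have z1: "wfinite \<rho> (\<lambda>x. f x - f x)" "wnorm \<rho> (\<lambda>x. f x - f x) \<le> 0"
    by (rule wnorm_bound[where c=0], simp)+
  show ?thesis unfolding Brho_def
  proof (intro CollectI conjI allI impI w)
    fix e :: real assume "e > 0"
    show "\<exists>g. continuous_on UNIV g \<and> bounded (range g) \<and>
        wfinite \<rho> (\<lambda>x. f x - g x) \<and> wnorm \<rho> (\<lambda>x. f x - g x) < e"
    proof -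
      have "wnorm \<rho> (\<lambda>x. f x - f x) < e" using z1(2) \<open>e>0\<close> by linarith
      show ?thesis
        apply (rule exI[of _ f])
        apply (intro conjI)
        apply (fact assms(1))
        apply (fact b)
        apply (fact z1(1))
        by (fact \<open>wnorm \<rho> (\<lambda>x. f x - f x) < e\<close>)
    qed
  qed
qed


lemma Brho_wfinite: "f \<in> Brho \<rho> \<Longrightarrow> wfinite \<rho> f"
  unfolding Brho_def by blast

lemma Brho_approx:
  assumes "f \<in> Brho \<rho>" "e > 0"
  obtains g B where "continuous_on UNIV g" "\<And>z. \<bar>g z\<bar> \<le> B" "\<And>z. \<bar>f z - g z\<bar> \<le> e * \<rho> z"
proof -
  obtain g where g: "continuous_on UNIV g" "bounded (range g)"
      "wfinite \<rho> (\<lambda>x. f x - g x)" "wnorm \<rho> (\<lambda>x. f x - g x) < e"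
    using assms unfolding Brho_def by blast
  obtain B where B: "\<And>z. \<bar>g z\<bar> \<le> B" using g(2) unfolding bounded_iff by auto
  have "\<And>z. \<bar>f z - g z\<bar> \<le> e * \<rho> z"
  proof -
    fix z
    have "\<bar>f z - g z\<bar> \<le> wnorm \<rho> (\<lambda>x. f x - g x) * \<rho> z" using wnorm_le[OF g(3)] by simp
    also have "\<dots> \<le> e * \<rho> z" using g(4) rho_pos[of z] by (intro mult_right_mono) auto
    finally show "\<bar>f z - g z\<bar> \<le> e * \<rho> z" .
  qed
  thus ?thesis using that g(1) B by blast
qed

lemma Brho_intro:
  assumes "wfinite \<rho> f"
    and "\<And>e. e > 0 \<Longrightarrow> \<exists>g B. continuous_on UNIV g \<and> (\<forall>z. \<bar>g z\<bar> \<le> B) \<and> (\<forall>z. \<bar>f z - g z\<bar> \<le> e * \<rho> z)"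
  shows "f \<in> Brho \<rho>"
  unfolding Brho_def
proof (intro CollectI conjI allI impI assms(1))
  fix e :: real assume "e > 0"
  then obtain g B where g: "continuous_on UNIV g" "\<forall>z. \<bar>g z\<bar> \<le> B" "\<forall>z. \<bar>f z - g z\<bar> \<le> e/2 * \<rho> z"
    using assms(2)[of "e/2"] by auto
  have b: "bounded (range g)" using g(2) unfolding bounded_iff by (intro exI[of _ B]) auto
  have w: "wfinite \<rho> (\<lambda>x. f x - g x)" "wnorm \<rho> (\<lambda>x. f x - g x) \<le> e/2"
    using wnorm_bound[of "\<lambda>x. f x - g x" "e/2"] g(3) by blast+
  have "wnorm \<rho> (\<lambda>x. f x - g x) < e" using w(2) \<open>e>0\<close> by linarith
  thus "\<exists>g. continuous_on UNIV g \<and> bounded (range g) \<and>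
        wfinite \<rho> (\<lambda>x. f x - g x) \<and> wnorm \<rho> (\<lambda>x. f x - g x) < e"
    using g(1) b w(1) by blast
qed

lemma Brho_lin:
  assumes f: "f \<in> Brho \<rho>" and g: "g \<in> Brho \<rho>"
  shows "(\<lambda>x. a * f x + b * g x) \<in> Brho \<rho>"
proof (rule Brho_intro)
  have wf: "wfinite \<rho> f" "wfinite \<rho> g" using f g by (simp_all add: Brho_wfinite)
  show "wfinite \<rho> (\<lambda>x. a * f x + b * g x)"
  proof (rule wnorm_bound(1))
    fix z
    have "\<bar>a * f z + b * g z\<bar> \<le> \<bar>a\<bar> * \<bar>f z\<bar> + \<bar>b\<bar> * \<bar>g z\<bar>"
      by (metis abs_mult abs_triangle_ineq)
    also have "\<dots> \<le> \<bar>a\<bar> * (wnorm \<rho> f * \<rho> z) + \<bar>b\<bar> * (wnorm \<rho> g * \<rho> z)"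
      using wnorm_le[OF wf(1)] wnorm_le[OF wf(2)] by (intro add_mono mult_left_mono) auto
    also have "\<dots> = (\<bar>a\<bar> * wnorm \<rho> f + \<bar>b\<bar> * wnorm \<rho> g) * \<rho> z" by algebra
    finally show "\<bar>a * f z + b * g z\<bar> \<le> (\<bar>a\<bar> * wnorm \<rho> f + \<bar>b\<bar> * wnorm \<rho> g) * \<rho> z" .
  qed
next
  fix e :: real assume "e > 0"
  define d where "d = e / (\<bar>a\<bar> + \<bar>b\<bar> + 1)"
  have d: "d > 0" using \<open>e>0\<close> unfolding d_def by (simp add: add_pos_nonneg)
  have de: "(\<bar>a\<bar> + \<bar>b\<bar>) * d \<le> e"
  proof -
    have "(\<bar>a\<bar> + \<bar>b\<bar>) * d \<le> (\<bar>a\<bar> + \<bar>b\<bar> + 1) * d" using d by simp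
    also have "\<dots> = e" unfolding d_def by (simp add: add_pos_nonneg)
    finally show ?thesis .
  qed
  obtain f1 B1 where f1: "continuous_on UNIV f1" "\<And>z. \<bar>f1 z\<bar> \<le> B1" "\<And>z. \<bar>f z - f1 z\<bar> \<le> d * \<rho> z"
    by (rule Brho_approx[OF f d]) blast
  obtain g1 B2 where g1: "continuous_on UNIV g1" "\<And>z. \<bar>g1 z\<bar> \<le> B2" "\<And>z. \<bar>g z - g1 z\<bar> \<le> d * \<rho> z"
    by (rule Brho_approx[OF g d]) blast
  show "\<exists>h B. continuous_on UNIV h \<and> (\<forall>z. \<bar>h z\<bar> \<le> B) \<and>
      (\<forall>z. \<bar>a * f z + b * g z - h z\<bar> \<le> e * \<rho> z)"
  proof (intro exI conjI allI)
    show "continuous_on UNIV (\<lambda>x. a * f1 x + b * g1 x)" using f1(1) g1(1) by (intro continuous_intros)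
    fix z
    have "\<bar>a * f1 z + b * g1 z\<bar> \<le> \<bar>a\<bar> * \<bar>f1 z\<bar> + \<bar>b\<bar> * \<bar>g1 z\<bar>"
      by (metis abs_mult abs_triangle_ineq)
    also have "\<dots> \<le> \<bar>a\<bar> * B1 + \<bar>b\<bar> * B2"
      using f1(2) g1(2) by (intro add_mono mult_left_mono) auto
    finally show "\<bar>a * f1 z + b * g1 z\<bar> \<le> \<bar>a\<bar> * B1 + \<bar>b\<bar> * B2" .
    have "\<bar>a * f z + b * g z - (a * f1 z + b * g1 z)\<bar> = \<bar>a * (f z - f1 z) + b * (g z - g1 z)\<bar>"
      by (simp add: algebra_simps)
    also have "\<dots> \<le> \<bar>a\<bar> * \<bar>f z - f1 z\<bar> + \<bar>b\<bar> * \<bar>g z - g1 z\<bar>"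
      by (metis abs_mult abs_triangle_ineq)
    also have "\<dots> \<le> \<bar>a\<bar> * (d * \<rho> z) + \<bar>b\<bar> * (d * \<rho> z)"
      using f1(3) g1(3) by (intro add_mono mult_left_mono) auto
    also have "\<dots> = ((\<bar>a\<bar> + \<bar>b\<bar>) * d) * \<rho> z" by algebra
    also have "\<dots> \<le> e * \<rho> z" using de rho_pos[of z] by (intro mult_right_mono) auto
    finally show "\<bar>a * f z + b * g z - (a * f1 z + b * g1 z)\<bar> \<le> e * \<rho> z" .
  qed
qed

lemma Brho_const: "(\<lambda>x. c) \<in> Brho \<rho>"
  by (rule Cb_Brho[where B="\<bar>c\<bar>"]) auto

lemma Brho_sum:
  assumes "finite Y" "\<And>y. y \<in> Y \<Longrightarrow> F y \<in> Brho \<rho>"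
  shows "(\<lambda>x. \<Sum>y\<in>Y. F y x) \<in> Brho \<rho>"
  using assms
proof (induction Y rule: finite_induct)
  case empty
  then show ?case using Brho_const[of 0] by simp
next
  case (insert y Y)
  have "(\<lambda>x. 1 * F y x + 1 * (\<Sum>y\<in>Y. F y x)) \<in> Brho \<rho>"
    using insert by (intro Brho_lin) auto
  thus ?case using insert by simp
qed

lemma Brho_cont:
  assumes f: "f \<in> Brho \<rho>"
  shows "continuous_on {x. \<rho> x \<le> R} f"
  unfolding continuous_on_def
proof (intro ballI)
  fix x assume x: "x \<in> {x. \<rho> x \<le> R}"
  hence R: "R > 0" using rho_pos[of x] by simp
  show "(f \<longlongrightarrow> f x) (at x within {x. \<rho> x \<le> R})"
    unfolding tendsto_iff
  proof (intro allI impI)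
    fix e :: real assume e: "e > 0"
    have e3: "e / (3 * R) > 0" using e R by simp
    obtain g B where g: "continuous_on UNIV g" "\<And>z. \<bar>f z - g z\<bar> \<le> e / (3 * R) * \<rho> z"
      and "\<And>z. \<bar>g z\<bar> \<le> B"
      by (rule Brho_approx[OF f e3]) blast
    have small: "\<bar>f z - g z\<bar> \<le> e / 3" if "\<rho> z \<le> R" for z
    proof -
      have "\<bar>f z - g z\<bar> \<le> e / (3 * R) * \<rho> z" by (rule g(2))
      also have "\<dots> \<le> e / (3 * R) * R" using that e3 by (intro mult_left_mono) auto
      also have "\<dots> = e / 3" using R by simp
      finally show ?thesis .
    qed
    have "(g \<longlongrightarrow> g x) (at x within {x. \<rho> x \<le> R})"
    proof -
      have "continuous_on {x. \<rho> x \<le> R} g" using g(1) continuous_on_subset by blast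
      thus ?thesis using x unfolding continuous_on_def by blast
    qed
    hence ev: "eventually (\<lambda>y. dist (g y) (g x) < e / 3) (at x within {x. \<rho> x \<le> R})"
      unfolding tendsto_iff using e by (meson divide_pos_pos zero_less_numeral)
    have ev2: "eventually (\<lambda>y. y \<in> {x. \<rho> x \<le> R}) (at x within {x. \<rho> x \<le> R})"
      by (rule eventually_at_topological[THEN iffD2]) blast
    show "eventually (\<lambda>y. dist (f y) (f x) < e) (at x within {x. \<rho> x \<le> R})"
      using ev ev2
    proof (rule eventually_elim2)
      fix y assume y: "dist (g y) (g x) < e / 3" "y \<in> {x. \<rho> x \<le> R}"
      have "\<bar>f y - g y\<bar> \<le> e / 3" using small y(2) by simp
      moreover have "\<bar>f x - g x\<bar> \<le> e / 3" using small x by simp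
      ultimately show "dist (f y) (f x) < e" using y(1) unfolding dist_real_def by linarith
    qed
  qed
qed


lemma Brho_comp_cont:
  assumes pc: "continuous_on (Rn n) \<phi>" and pb: "\<And>v. v \<in> Rn n \<Longrightarrow> \<bar>\<phi> v\<bar> \<le> Bp"
    and fs: "\<And>i. i < n \<Longrightarrow> fs i \<in> Brho \<rho>"
  shows "(\<lambda>x. \<phi> (vec_of n (\<lambda>i. fs i x))) \<in> Brho \<rho>"
proof (rule Brho_intro)
  have Bp: "Bp \<ge> 0" using pb[OF vec_of_Rn[of n "\<lambda>_. 0"]] by linarith
  show "wfinite \<rho> (\<lambda>x. \<phi> (vec_of n (\<lambda>i. fs i x)))"
    using pb[OF vec_of_Rn] by (rule bounded_wfinite)
  fix e :: real assume e: "e > 0"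
  define R where "R = 2 * Bp / e + 1"
  have R: "R > 0" unfolding R_def using Bp e by (simp add: add_nonneg_pos)
  define K where "K = {z. \<rho> z \<le> R}"
  have Kc: "compact K" unfolding K_def using R by (intro compact_K) simp
  have "\<exists>Mi. \<forall>z\<in>K. \<bar>fs i z\<bar> \<le> Mi" if "i < n" for i
  proof -
    have "compact (fs i ` K)"
      using compact_continuous_image[OF Brho_cont[OF fs[OF that], of R, folded K_def] Kc] .
    hence "bounded (fs i ` K)" by (rule compact_imp_bounded)
    thus ?thesis unfolding bounded_iff by auto
  qed
  then obtain Mf where Mf: "\<And>i z. i < n \<Longrightarrow> z \<in> K \<Longrightarrow> \<bar>fs i z\<bar> \<le> Mf i" by metis
  define M where "M = (\<Sum>i<n. \<bar>Mf i\<bar>)"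
  have M: "\<bar>fs i z\<bar> \<le> M" if "i < n" "z \<in> K" for i z
  proof -
    have "\<bar>Mf i\<bar> \<le> M" unfolding M_def using that(1) by (intro member_le_sum) auto
    thus ?thesis using Mf[OF that] by linarith
  qed
  define Sc where "Sc = {v::nat \<Rightarrow> real. (\<forall>i<n. \<bar>v i\<bar> \<le> M + 1) \<and> (\<forall>i\<ge>n. v i = 0)}"
  have ScRn: "Sc \<subseteq> Rn n" unfolding Sc_def Rn_def by auto
  have "uniformly_continuous_on Sc \<phi>"
    using compact_uniformly_continuous[OF continuous_on_subset[OF pc ScRn]] compact_box
    unfolding Sc_def by blast
  moreover have "e * rmin > 0" using e rmin(1) by simp
  ultimately obtain eta where eta: "eta > 0"
    "\<And>u v. u \<in> Sc \<Longrightarrow> v \<in> Sc \<Longrightarrow> dist v u < eta \<Longrightarrow> dist (\<phi> v) (\<phi> u) < e * rmin"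
    unfolding uniformly_continuous_on_def by metis
  define tau where "tau = min (eta / 4) (1 / 2)"
  have tau: "tau > 0" "tau \<le> 1/2" "2 * tau < eta" unfolding tau_def using eta(1) by auto
  have "tau / R > 0" using tau R by simp
  hence "\<exists>g B. continuous_on UNIV g \<and> (\<forall>z. \<bar>g z\<bar> \<le> B) \<and> (\<forall>z. \<bar>fs i z - g z\<bar> \<le> (tau / R) * \<rho> z)"
    if "i < n" for i
    using Brho_approx[OF fs[OF that]] by metis
  then obtain gf where gf: "\<And>i. i < n \<Longrightarrow> continuous_on UNIV (gf i)"
     "\<And>i z. i < n \<Longrightarrow> \<bar>fs i z - gf i z\<bar> \<le> (tau / R) * \<rho> z"
    by metis
  define G where "G z = vec_of n (\<lambda>i. gf i z)" for z
  have Gc: "continuous_on UNIV G"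
    unfolding G_def vec_of_def
  proof (intro continuous_on_coordinatewise_then_product)
    fix j
    show "continuous_on UNIV (\<lambda>z. if j < n then gf j z else 0)"
      by (cases "j < n") (simp_all add: gf(1))
  qed
  show "\<exists>g B. continuous_on UNIV g \<and> (\<forall>z. \<bar>g z\<bar> \<le> B) \<and>
      (\<forall>z. \<bar>\<phi> (vec_of n (\<lambda>i. fs i z)) - g z\<bar> \<le> e * \<rho> z)"
  proof (intro exI conjI allI)
    show "continuous_on UNIV (\<lambda>z. \<phi> (G z))"
      by (rule continuous_on_compose2[OF pc Gc]) (auto simp: G_def vec_of_Rn)
    fix z
    show "\<bar>\<phi> (G z)\<bar> \<le> Bp" unfolding G_def by (rule pb[OF vec_of_Rn])
    show "\<bar>\<phi> (vec_of n (\<lambda>i. fs i z)) - \<phi> (G z)\<bar> \<le> e * \<rho> z"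
    proof (cases "\<rho> z \<le> R")
      case True
      hence zK: "z \<in> K" unfolding K_def by simp
      have close: "\<bar>fs i z - gf i z\<bar> \<le> tau" if "i < n" for i
      proof -
        have "\<bar>fs i z - gf i z\<bar> \<le> (tau / R) * \<rho> z" by (rule gf(2)[OF that])
        also have "\<dots> \<le> (tau / R) * R" using True \<open>tau / R > 0\<close> by (intro mult_left_mono) auto
        also have "\<dots> = tau" using R by simp
        finally show ?thesis .
      qed
      have F_Sc: "vec_of n (\<lambda>i. fs i z) \<in> Sc"
        unfolding Sc_def vec_of_def using M[OF _ zK] by force
      have G_Sc: "G z \<in> Sc"
        unfolding Sc_def G_def vec_of_def
      proof (intro CollectI conjI allI impI)
        fix i assume i: "i < n"
        have "\<bar>gf i z\<bar> \<le> \<bar>fs i z\<bar> + \<bar>fs i z - gf i z\<bar>" by linarith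
        also have "\<dots> \<le> M + 1" using M[OF i zK] close[OF i] tau(2) by linarith
        finally show "\<bar>if i < n then gf i z else 0\<bar> \<le> M + 1" using i by simp
      qed simp
      have "dist (G z) (vec_of n (\<lambda>i. fs i z)) \<le> 2 * tau"
        unfolding G_def
        by (rule dist_Rn[OF vec_of_Rn vec_of_Rn]) (use tau(1) close in \<open>auto simp: vec_of_def abs_minus_commute\<close>)
      hence "dist (G z) (vec_of n (\<lambda>i. fs i z)) < eta" using tau(3) by linarith
      hence "dist (\<phi> (G z)) (\<phi> (vec_of n (\<lambda>i. fs i z))) < e * rmin"
        using eta(2)[OF F_Sc G_Sc] by blast
      hence "\<bar>\<phi> (vec_of n (\<lambda>i. fs i z)) - \<phi> (G z)\<bar> < e * rmin"
        by (simp add: dist_real_def abs_minus_commute)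
      also have "\<dots> \<le> e * \<rho> z" using rmin(2)[of z] e by simp
      finally show ?thesis by simp
    next
      case False
      have "\<bar>\<phi> (vec_of n (\<lambda>i. fs i z)) - \<phi> (G z)\<bar> \<le> Bp + Bp"
        using pb[OF vec_of_Rn, of "\<lambda>i. fs i z"] pb[OF vec_of_Rn, of "\<lambda>i. gf i z"]
        unfolding G_def by linarith
      also have "\<dots> < e * R" unfolding R_def using e by (simp add: field_simps)
      also have "\<dots> \<le> e * \<rho> z" using False e by simp
      finally show ?thesis by simp
    qed
  qed
qed

lemma Brho_comp_lip:
  assumes f: "f \<in> Brho \<rho>" and hc: "continuous_on UNIV h"
    and lip: "\<And>s t. \<bar>h s - h t\<bar> \<le> K * \<bar>s - t\<bar>" and K: "K \<ge> 0"
    and hb: "\<And>t. \<bar>h t\<bar> \<le> M"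
  shows "(\<lambda>x. h (f x)) \<in> Brho \<rho>"
proof (rule Brho_intro)
  show "wfinite \<rho> (\<lambda>x. h (f x))" using hb by (rule bounded_wfinite)
next
  fix e :: real assume "e > 0"
  define d where "d = e / (K + 1)"
  have d: "d > 0" using \<open>e>0\<close> K unfolding d_def by simp
  have Kd: "K * d \<le> e"
  proof -
    have "K * d \<le> (K + 1) * d" using d by simp
    also have "\<dots> = e" unfolding d_def using K by simp
    finally show ?thesis .
  qed
  obtain g B where g: "continuous_on UNIV g" "\<And>z. \<bar>f z - g z\<bar> \<le> d * \<rho> z"
     and "\<And>z. \<bar>g z\<bar> \<le> B"
    by (rule Brho_approx[OF f d]) blast
  show "\<exists>g B. continuous_on UNIV g \<and> (\<forall>z. \<bar>g z\<bar> \<le> B) \<and> (\<forall>z. \<bar>h (f z) - g z\<bar> \<le> e * \<rho> z)"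
  proof (intro exI conjI allI)
    show "continuous_on UNIV (\<lambda>x. h (g x))"
      using continuous_on_compose[OF g(1) continuous_on_subset[OF hc]] by (simp add: o_def)
    fix z
    show "\<bar>h (g z)\<bar> \<le> M" by (rule hb)
    have "\<bar>h (f z) - h (g z)\<bar> \<le> K * \<bar>f z - g z\<bar>" by (rule lip)
    also have "\<dots> \<le> K * (d * \<rho> z)" using g(2) K by (intro mult_left_mono) auto
    also have "\<dots> = (K * d) * \<rho> z" by simp
    also have "\<dots> \<le> e * \<rho> z" using Kd rho_pos[of z] by (intro mult_right_mono) auto
    finally show "\<bar>h (f z) - h (g z)\<bar> \<le> e * \<rho> z" .
  qed
qed

end

locale homP = wsp +
  fixes P :: "('a \<Rightarrow> real) \<Rightarrow> ('a \<Rightarrow> real)"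
  assumes hom: "smooth_op_alg_hom \<rho> P"
begin

lemma P_in: "f \<in> Brho \<rho> \<Longrightarrow> P f \<in> Brho \<rho>"
  using hom unfolding smooth_op_alg_hom_def by blast

lemma P_lin: "f \<in> Brho \<rho> \<Longrightarrow> g \<in> Brho \<rho> \<Longrightarrow>
    P (\<lambda>x. a * f x + b * g x) = (\<lambda>x. a * P f x + b * P g x)"
  using hom unfolding smooth_op_alg_hom_def by blast

lemma P_cont: "f \<in> Brho \<rho> \<Longrightarrow> e > 0 \<Longrightarrow> \<exists>d>0. \<forall>g\<in>Brho \<rho>.
        wnorm \<rho> (\<lambda>x. g x - f x) < d \<longrightarrow> wnorm \<rho> (\<lambda>x. P g x - P f x) < e"
  using hom unfolding smooth_op_alg_hom_def by blast

lemma comp_in: "g \<in> Ctrig \<Longrightarrow> f \<in> Brho \<rho> \<Longrightarrow> (\<lambda>x. g (f x)) \<in> Brho \<rho>"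
proof -
  assume g: "g \<in> Ctrig" and f: "f \<in> Brho \<rho>"
  obtain K where K: "K \<ge> 0" "\<forall>s t. \<bar>g s - g t\<bar> \<le> K * \<bar>s - t\<bar>" using Ctrig_lip[OF g] by blast
  obtain M where M: "\<forall>t. \<bar>g t\<bar> \<le> M" using Ctrig_bounded[OF g] by blast
  show ?thesis using Brho_comp_lip[OF f Ctrig_cont[OF g], of K M] K M by blast
qed

lemma P_comp: "g \<in> Ctrig \<Longrightarrow> f \<in> Brho \<rho> \<Longrightarrow> P (\<lambda>x. g (f x)) = (\<lambda>x. g (P f x))"
proof -
  assume g: "g \<in> Ctrig" and f: "f \<in> Brho \<rho>"
  have H: "\<forall>n \<phi> fs. smooth_Rn n \<phi> \<and> bounded (\<phi> ` Rn n) \<and> (\<forall>i<n. fs i \<in> Brho \<rho>) \<longrightarrow>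
        P (\<lambda>x. \<phi> (vec_of n (\<lambda>i. fs i x))) = (\<lambda>x. \<phi> (vec_of n (\<lambda>i. P (fs i) x)))"
    using hom unfolding smooth_op_alg_hom_def by blast
  have "P (\<lambda>x. (\<lambda>v. g (v 0)) (vec_of 1 (\<lambda>i. (\<lambda>i. f) i x))) =
        (\<lambda>x. (\<lambda>v. g (v 0)) (vec_of 1 (\<lambda>i. P ((\<lambda>i. f) i) x)))"
    apply (rule H[rule_format])
    using smooth_Ctrig[OF g] f by auto
  thus ?thesis by (simp add: vec_of_def)
qed

lemma P_const: "P (\<lambda>x. c) = (\<lambda>x. c)"
  using P_comp[OF Ctrig.Cc[of c] Brho_const[of 0]] by simp

lemma P_sum: "finite Y \<Longrightarrow> (\<And>y. y \<in> Y \<Longrightarrow> F y \<in> Brho \<rho>) \<Longrightarrow>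
    P (\<lambda>x. \<Sum>y\<in>Y. F y x) = (\<lambda>x. \<Sum>y\<in>Y. P (F y) x)"
proof (induction Y rule: finite_induct)
  case empty
  then show ?case using P_const[of 0] by simp
next
  case (insert y Y)
  have "P (\<lambda>x. 1 * F y x + 1 * (\<Sum>y\<in>Y. F y x)) = (\<lambda>x. 1 * P (F y) x + 1 * P (\<lambda>x. \<Sum>y\<in>Y. F y x) x)"
    using insert by (intro P_lin Brho_sum) auto
  thus ?case using insert by simp
qed

lemma P_bound: "\<exists>L>0. \<forall>g\<in>Brho \<rho>. \<forall>c>0. wnorm \<rho> g < c \<longrightarrow> (\<forall>x. \<bar>P g x\<bar> \<le> L * c * \<rho> x)"
proof -
  obtain d where d: "d > 0" "\<forall>g\<in>Brho \<rho>. wnorm \<rho> (\<lambda>x. g x - 0) < d \<longrightarrow>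
      wnorm \<rho> (\<lambda>x. P g x - P (\<lambda>x. 0) x) < 1"
    using P_cont[OF Brho_const[of 0], of 1] by auto
  have d2: "\<forall>g\<in>Brho \<rho>. wnorm \<rho> g < d \<longrightarrow> wnorm \<rho> (P g) < 1"
    using d(2) unfolding P_const by simp
  have "\<forall>g\<in>Brho \<rho>. \<forall>c>0. wnorm \<rho> g < c \<longrightarrow> (\<forall>x. \<bar>P g x\<bar> \<le> (2 / d) * c * \<rho> x)"
  proof (intro ballI allI impI)
    fix g c x assume g: "g \<in> Brho \<rho>" and c: "c > 0" "wnorm \<rho> g < c"
    define s where "s = d / (2 * c)"
    have s: "s > 0" unfolding s_def using d c by simp
    define g' where "g' = (\<lambda>x. s * g x + 0 * g x)"
    have g': "g' \<in> Brho \<rho>" unfolding g'_def using g by (intro Brho_lin)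
    have wg: "wfinite \<rho> g" using g by (rule Brho_wfinite)
    have "wnorm \<rho> g' \<le> s * wnorm \<rho> g"
    proof (rule wnorm_bound(2))
      fix z
      have "\<bar>g' z\<bar> = s * \<bar>g z\<bar>" unfolding g'_def using s by (simp add: abs_mult)
      also have "\<dots> \<le> s * (wnorm \<rho> g * \<rho> z)" using wnorm_le[OF wg] s by (intro mult_left_mono) auto
      finally show "\<bar>g' z\<bar> \<le> s * wnorm \<rho> g * \<rho> z" by simp
    qed
    also have "\<dots> < s * c" using s c by simp
    also have "\<dots> < d" unfolding s_def using c d by simp
    finally have "wnorm \<rho> (P g') < 1" using d2 g' by blast
    moreover have "wfinite \<rho> (P g')" using P_in[OF g'] by (rule Brho_wfinite)
    ultimately have "\<bar>P g' x\<bar> \<le> \<rho> x"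
    proof -
      assume a: "wnorm \<rho> (P g') < 1" "wfinite \<rho> (P g')"
      have "\<bar>P g' x\<bar> \<le> wnorm \<rho> (P g') * \<rho> x" by (rule wnorm_le[OF a(2)])
      also have "\<dots> \<le> 1 * \<rho> x" using a(1) rho_pos[of x] by (intro mult_right_mono) auto
      finally show ?thesis by simp
    qed
    moreover have "P g' x = s * P g x" unfolding g'_def using P_lin[OF g g, of s 0] by simp
    ultimately have "s * \<bar>P g x\<bar> \<le> \<rho> x" using s by (simp add: abs_mult)
    hence "\<bar>P g x\<bar> \<le> \<rho> x / s" using s by (simp add: field_simps)
    also have "\<rho> x / s = (2 / d) * c * \<rho> x" unfolding s_def using d c by (simp add: field_simps)
    finally show "\<bar>P g x\<bar> \<le> (2 / d) * c * \<rho> x" .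
  qed
  thus ?thesis using d(1) by (intro exI[of _ "2 / d"]) auto
qed


definition "Lc = (SOME L. L > 0 \<and> (\<forall>g\<in>Brho \<rho>. \<forall>c>0. wnorm \<rho> g < c \<longrightarrow> (\<forall>x. \<bar>P g x\<bar> \<le> L * c * \<rho> x)))"

lemma Lc: "Lc > 0" "g \<in> Brho \<rho> \<Longrightarrow> c > 0 \<Longrightarrow> wnorm \<rho> g < c \<Longrightarrow> \<bar>P g x\<bar> \<le> Lc * c * \<rho> x"
  using someI_ex[OF P_bound] unfolding Lc_def by blast+

lemma small_P:
  assumes h: "h \<in> Brho \<rho>" and h1: "\<And>z. \<bar>h z\<bar> \<le> 1"
    and h2: "\<And>z. \<rho> z \<le> 4 * Lc * \<rho> x \<Longrightarrow> \<bar>h z\<bar> \<le> rmin / (4 * Lc * \<rho> x)"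
  shows "\<bar>P h x\<bar> \<le> 1/2"
proof -
  define q where "q = 4 * Lc * \<rho> x"
  have q: "q > 0" unfolding q_def using Lc(1) rho_pos[of x] by simp
  have b: "\<bar>h z\<bar> \<le> (1 / q) * \<rho> z" for z
  proof (cases "\<rho> z \<le> q")
    case True
    hence "\<bar>h z\<bar> \<le> rmin / q" using h2 unfolding q_def by blast
    also have "\<dots> \<le> \<rho> z / q" using rmin(2)[of z] q by (simp add: divide_right_mono)
    finally show ?thesis by simp
  next
    case False
    have "\<bar>h z\<bar> \<le> q / q" using h1[of z] q by simp
    also have "\<dots> \<le> \<rho> z / q" using False q by (simp add: divide_right_mono)
    finally show ?thesis by simp
  qed
  have "wnorm \<rho> h \<le> 1 / q" using b by (rule wnorm_bound(2))
  also have "\<dots> < 2 / q" using q by (simp add: divide_strict_right_mono)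
  finally have "\<bar>P h x\<bar> \<le> Lc * (2 / q) * \<rho> x" using q by (intro Lc(2)[OF h]) auto
  also have "\<dots> = 1/2" unfolding q_def using Lc(1) rho_pos[of x] by (simp add: field_simps)
  finally show ?thesis .
qed

lemma sin_sq_pos: "d \<noteq> 0 \<Longrightarrow> sin (d / \<bar>d\<bar>) * sin (d / \<bar>d\<bar>) > (0::real)"
proof -
  assume d: "d \<noteq> 0"
  have "(1::real) < pi" using pi_gt3 by linarith
  hence s1: "sin (1::real) > 0" using sin_gt_zero[of 1] by simp
  show ?thesis
  proof (cases "d > 0")
    case True
    thus ?thesis using s1 by simp
  next
    case False
    hence "d / \<bar>d\<bar> = -1" using d by simp
    thus ?thesis using s1 by simp
  qed
qed

lemma point_exists: "\<exists>y. \<rho> y \<le> 4 * Lc * \<rho> x \<and> (\<forall>f\<in>Brho \<rho>. P f x = f y)"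
proof (rule ccontr)
  define K where "K = {z. \<rho> z \<le> 4 * Lc * \<rho> x}"
  have Kc: "compact K" unfolding K_def using Lc(1) rho_pos[of x] by (intro compact_K) simp
  assume "\<not> ?thesis"
  hence H: "\<forall>y\<in>K. \<exists>f. f \<in> Brho \<rho> \<and> P f x \<noteq> f y" unfolding K_def by auto
  define fy where "fy y = (SOME f. f \<in> Brho \<rho> \<and> P f x \<noteq> f y)" for y
  have fy: "fy y \<in> Brho \<rho>" "P (fy y) x \<noteq> fy y y" if "y \<in> K" for y
    using someI_ex[OF H[rule_format, OF that]] unfolding fy_def by blast+
  define lam where "lam y = 1 / \<bar>fy y y - P (fy y) x\<bar>" for y
  define sy where "sy y = (\<lambda>t. sin (lam y * t + (- lam y * P (fy y) x)) * sin (lam y * t + (- lam y * P (fy y) x)))" for y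
  define gy where "gy y = (\<lambda>z. sy y (fy y z))" for y
  have sy: "sy y \<in> Ctrig" for y unfolding sy_def by (intro Ctrig.Cmul Ctrig.Cs)
  have gy_in: "gy y \<in> Brho \<rho>" if "y \<in> K" for y
    unfolding gy_def using comp_in[OF sy fy(1)[OF that]] .
  have gy_P: "P (gy y) x = 0" if "y \<in> K" for y
  proof -
    have "P (gy y) x = sy y (P (fy y) x)" unfolding gy_def using P_comp[OF sy fy(1)[OF that]] by simp
    thus ?thesis by (simp add: sy_def)
  qed
  have gy_pos: "gy y y > 0" if "y \<in> K" for y
  proof -
    have "lam y * fy y y + (- lam y * P (fy y) x) = (fy y y - P (fy y) x) / \<bar>fy y y - P (fy y) x\<bar>"
      unfolding lam_def by (simp add: diff_divide_distrib)
    thus ?thesis unfolding gy_def sy_def using sin_sq_pos[of "fy y y - P (fy y) x"] fy(2)[OF that] by simp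
  qed
  have gy_01: "0 \<le> gy y z" "gy y z \<le> 1" for y z
  proof -
    let ?s = "sin (lam y * fy y z + (- lam y * P (fy y) x))"
    show "0 \<le> gy y z" unfolding gy_def sy_def by simp
    have "\<bar>?s\<bar> * \<bar>?s\<bar> \<le> 1 * 1" by (intro mult_mono) auto
    thus "gy y z \<le> 1" unfolding gy_def sy_def by (simp add: abs_mult[symmetric])
  qed
  have "\<exists>V. open V \<and> V \<inter> K = gy y -` {0<..} \<inter> K" if "y \<in> K" for y
  proof -
    have "continuous_on K (gy y)" using Brho_cont[OF gy_in[OF that], of "4 * Lc * \<rho> x"]
      unfolding K_def .
    hence "\<forall>B. open B \<longrightarrow> (\<exists>A. open A \<and> A \<inter> K = gy y -` B \<inter> K)"
      by (simp only: continuous_on_open_invariant)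
    thus ?thesis using open_greaterThan[of "0::real"] by blast
  qed
  then obtain V where V: "\<And>y. y \<in> K \<Longrightarrow> open (V y) \<and> V y \<inter> K = gy y -` {0<..} \<inter> K"
    by metis
  have cov: "K \<subseteq> (\<Union>y\<in>K. V y)"
  proof
    fix z assume "z \<in> K"
    hence "z \<in> V z" using V[of z] gy_pos[of z] by blast
    thus "z \<in> (\<Union>y\<in>K. V y)" using \<open>z \<in> K\<close> by blast
  qed
  obtain Y where Y: "Y \<subseteq> K" "finite Y" "K \<subseteq> (\<Union>y\<in>Y. V y)"
    using compactE_image[OF Kc, of K V] V cov by blast
  define F where "F = (\<lambda>z. \<Sum>y\<in>Y. gy y z)"
  have F_in: "F \<in> Brho \<rho>" unfolding F_def using Y gy_in by (intro Brho_sum) auto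
  have F_P: "P F x = 0" unfolding F_def using P_sum[OF Y(2), of gy] Y gy_in gy_P
    by (simp add: subset_iff)
  have F_nn: "F z \<ge> 0" for z unfolding F_def using gy_01 by (simp add: sum_nonneg)
  have F_le: "F z \<le> card Y" for z
    unfolding F_def using sum_bounded_above[of Y "\<lambda>y. gy y z" 1] gy_01 by simp
  have F_pos: "F z > 0" if zK: "z \<in> K" for z
  proof -
    obtain y where y: "y \<in> Y" "z \<in> V y" using Y(3) zK by blast
    hence "gy y z > 0" using V[of y] Y(1) zK by blast
    also have "gy y z \<le> F z" unfolding F_def using y(1) Y(2) gy_01
      by (intro member_le_sum) auto
    finally show ?thesis .
  qed
  define m where "m = real (card Y) + 1"
  have m: "m \<ge> 1" unfolding m_def by simp
  obtain dl where dl: "dl > 0" "dl \<le> m" "\<And>z. z \<in> K \<Longrightarrow> dl \<le> F z"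
  proof (cases "K = {}")
    case True
    show ?thesis by (rule that[of 1]) (use m True in auto)
  next
    case False
    obtain z0 where z0: "z0 \<in> K" "\<And>z. z \<in> K \<Longrightarrow> F z0 \<le> F z"
      using continuous_attains_inf[OF Kc False Brho_cont[OF F_in, of "4 * Lc * \<rho> x", folded K_def]] by blast
    show ?thesis using that[of "F z0"] F_pos[OF z0(1)] z0(2) F_le[of z0] unfolding m_def by fastforce
  qed
  define c where "c = pi / (2 * m)"
  have c: "c > 0" unfolding c_def using m by simp
  have cdl: "c * dl \<le> pi / 2" unfolding c_def using dl(2) m by (simp add: field_simps)
  define eta where "eta = rmin / (4 * Lc * \<rho> x)"
  have eta: "eta > 0" unfolding eta_def using rmin(1) Lc(1) rho_pos[of x] by simp
  have cos1: "cos (c * dl) < 1" using cos_monotone_0_pi[of 0 "c * dl"] c dl(1) cdl pi_gt3 by simp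
  obtain n where n: "cos (c * dl) ^ n < eta" using real_arch_pow_inv[OF eta cos1] by blast
  define h where "h = (\<lambda>z. (\<lambda>t. sin (c * t + pi / 2) ^ n) (F z))"
  have ph: "(\<lambda>t. sin (c * t + pi / 2) ^ n) \<in> Ctrig" by (intro Ctrig_pow Ctrig.Cs)
  have h_in: "h \<in> Brho \<rho>" unfolding h_def by (rule comp_in[OF ph F_in])
  have h_P: "P h x = 1" unfolding h_def P_comp[OF ph F_in] using F_P by simp
  have h1: "\<bar>h z\<bar> \<le> 1" for z
  proof -
    have "\<bar>sin (c * F z + pi / 2)\<bar> ^ n \<le> 1" by (intro power_le_one) auto
    thus ?thesis unfolding h_def by (simp add: power_abs)
  qed
  have h2: "\<bar>h z\<bar> \<le> eta" if "z \<in> K" for z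
  proof -
    have eq: "h z = cos (c * F z) ^ n" unfolding h_def by (simp add: sin_add)
    have a: "c * dl \<le> c * F z" using dl(3)[OF that] c by simp
    have b: "c * F z \<le> pi / 2"
    proof -
      have "F z \<le> m" using F_le[of z] unfolding m_def by simp
      thus ?thesis unfolding c_def using m by (simp add: field_simps)
    qed
    have c0: "0 \<le> cos (c * F z)" using a b c dl(1) by (intro cos_ge_zero) (auto intro: order_trans[of _ 0])
    have "cos (c * F z) \<le> cos (c * dl)"
      using a b c dl(1) pi_gt3 by (intro cos_monotone_0_pi_le) auto
    hence "cos (c * F z) ^ n \<le> cos (c * dl) ^ n" using c0 by (intro power_mono)
    thus ?thesis using eq c0 n by simp
  qed
  have "\<bar>P h x\<bar> \<le> 1/2"
    using small_P[OF h_in h1] h2 unfolding K_def eta_def by blast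
  thus False using h_P by simp
qed


end

context wsp
begin

lemma sep_fun:
  assumes creg: "completely_regular_space (euclidean :: 'a topology)"
    and B: "open B" "p \<in> B"
  shows "\<exists>f. f \<in> Brho \<rho> \<and> continuous_on UNIV f \<and> f p = 0 \<and> (\<forall>z. z \<notin> B \<longrightarrow> f z = 1)"
proof -
  have "closedin euclidean (- B)" using B(1) by (simp add: closed_closedin[symmetric] open_closed[symmetric])
  moreover have "p \<in> topspace euclidean - (- B)" using B(2) by simp
  ultimately obtain f :: "'a \<Rightarrow> real" where f: "continuous_map euclidean (top_of_set {0..1}) f"
      "f p = 0" "f ` (- B) \<subseteq> {1}"
    using creg unfolding completely_regular_space_def by blast
  have fc: "continuous_on UNIV f" and fr: "\<And>z. f z \<in> {0..1}"
    using f(1) unfolding continuous_map_in_subtopology by auto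
  have "\<And>z. \<bar>f z\<bar> \<le> 1" using fr by (simp add: abs_le_iff)
  hence "f \<in> Brho \<rho>" using Cb_Brho[OF fc] by blast
  thus ?thesis using fc f(2,3) by blast
qed

lemma rep_unique:
  assumes creg: "completely_regular_space (euclidean :: 'a topology)"
    and r1: "composition_rep \<rho> P \<psi>1" and r2: "composition_rep \<rho> P \<psi>2"
  shows "\<psi>1 = \<psi>2"
proof
  fix x
  show "\<psi>1 x = \<psi>2 x"
  proof (rule ccontr)
    assume ne: "\<psi>1 x \<noteq> \<psi>2 x"
    have "closedin euclidean {\<psi>2 x}" by (rule closedin_t1_singleton[OF Hausdorff_imp_t1_space[OF haus]]) simp
    hence "open (- {\<psi>2 x})" by (simp add: closed_closedin[symmetric] open_closed)
    then obtain f where f: "f \<in> Brho \<rho>" "f (\<psi>1 x) = 0" "\<forall>z. z \<notin> - {\<psi>2 x} \<longrightarrow> f z = 1"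
      using sep_fun[OF creg, of "- {\<psi>2 x}" "\<psi>1 x"] ne by blast
    have "P f = f \<circ> \<psi>1" "P f = f \<circ> \<psi>2" using r1 r2 f(1) unfolding composition_rep_def by blast+
    hence "f (\<psi>1 x) = f (\<psi>2 x)" by (metis comp_apply)
    thus False using f by simp
  qed
qed

end

context homP
begin

definition "psi x = (SOME y. \<rho> y \<le> 4 * Lc * \<rho> x \<and> (\<forall>f\<in>Brho \<rho>. P f x = f y))"

lemma psi: "\<rho> (psi x) \<le> 4 * Lc * \<rho> x" "f \<in> Brho \<rho> \<Longrightarrow> P f x = f (psi x)"
  using someI_ex[OF point_exists[of x]] unfolding psi_def by blast+

lemma psi_cont:
  assumes creg: "completely_regular_space (euclidean :: 'a topology)"
    and S: "S = {x. \<rho> x \<le> R}"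
  shows "continuous_on S psi"
  unfolding continuous_on_open_invariant
proof (intro allI impI)
  fix B :: "'a set" assume B: "open B"
  have "\<exists>A. open A \<and> x0 \<in> A \<and> A \<inter> S \<subseteq> psi -` B" if x0: "x0 \<in> S" "psi x0 \<in> B" for x0
  proof -
    obtain f where f: "f \<in> Brho \<rho>" "f (psi x0) = 0" "\<forall>z. z \<notin> B \<longrightarrow> f z = 1"
      using sep_fun[OF creg B x0(2)] by blast
    have "continuous_on S (P f)" unfolding S by (rule Brho_cont[OF P_in[OF f(1)]])
    hence "\<exists>A. open A \<and> A \<inter> S = P f -` {..<1/2} \<inter> S"
      unfolding continuous_on_open_invariant by (meson open_lessThan)
    then obtain A where A: "open A" "A \<inter> S = P f -` {..<1/2} \<inter> S" by blast
    have "x0 \<in> A" using A(2) x0(1) psi(2)[OF f(1), of x0] f(2) by auto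
    moreover have "A \<inter> S \<subseteq> psi -` B"
    proof
      fix z assume "z \<in> A \<inter> S"
      hence "P f z < 1/2" using A(2) by auto
      hence "f (psi z) < 1/2" using psi(2)[OF f(1)] by simp
      thus "z \<in> psi -` B" using f(3) by fastforce
    qed
    ultimately show ?thesis using A(1) by blast
  qed
  then obtain Af where Af: "\<And>x0. x0 \<in> S \<Longrightarrow> psi x0 \<in> B \<Longrightarrow> open (Af x0) \<and> x0 \<in> Af x0 \<and> Af x0 \<inter> S \<subseteq> psi -` B"
    by metis
  define A where "A = (\<Union>x0\<in>S \<inter> psi -` B. Af x0)"
  have "open A" unfolding A_def using Af by blast
  moreover have "A \<inter> S = psi -` B \<inter> S"
  proof
    show "A \<inter> S \<subseteq> psi -` B \<inter> S" unfolding A_def using Af by blast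
    show "psi -` B \<inter> S \<subseteq> A \<inter> S" unfolding A_def using Af by blast
  qed
  ultimately show "\<exists>A. open A \<and> A \<inter> S = psi -` B \<inter> S" by blast
qed

lemma psi_rep:
  assumes creg: "completely_regular_space (euclidean :: 'a topology)"
  shows "composition_rep \<rho> P psi"
  unfolding composition_rep_def
proof (intro conjI allI impI ballI)
  fix R :: real
  show "continuous_on (sublevel \<rho> R) psi" unfolding sublevel_def by (rule psi_cont[OF creg]) simp
next
  show "bdd_above (range (\<lambda>x. \<rho> (psi x) / \<rho> x))"
  proof (rule bdd_aboveI)
    fix r assume "r \<in> range (\<lambda>x. \<rho> (psi x) / \<rho> x)"
    then obtain x where "r = \<rho> (psi x) / \<rho> x" by blast
    thus "r \<le> 4 * Lc" using psi(1)[of x] rho_pos[of x] by (simp add: divide_le_eq)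
  qed
next
  fix f assume "f \<in> Brho \<rho>"
  thus "P f = f \<circ> psi" using psi(2) by auto
qed


end

context wsp
begin

lemma rep_imp_hom:
  assumes Pin: "\<forall>f\<in>Brho \<rho>. P f \<in> Brho \<rho>" and r: "composition_rep \<rho> P \<psi>"
  shows "smooth_op_alg_hom \<rho> P"
proof -
  have Peq: "\<And>f. f \<in> Brho \<rho> \<Longrightarrow> P f = f \<circ> \<psi>" using r unfolding composition_rep_def by blast
  have bdd: "bdd_above (range (\<lambda>x. \<rho> (\<psi> x) / \<rho> x))"
    using conjunct1[OF conjunct2[OF r[unfolded composition_rep_def]]] .
  define C where "C = (SUP x. \<rho> (\<psi> x) / \<rho> x)"
  have Crat: "\<rho> (\<psi> x) / \<rho> x \<le> C" for x unfolding C_def using bdd by (intro cSUP_upper) auto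
  have Cb: "\<rho> (\<psi> x) \<le> C * \<rho> x" for x using Crat[of x] rho_pos[of x] by (simp add: divide_le_eq)
  have C: "C > 0" using Crat[of undefined] rho_pos[of undefined] rho_pos[of "\<psi> undefined"]
    by (meson divide_pos_pos less_le_trans)
  show ?thesis unfolding smooth_op_alg_hom_def
  proof (intro conjI)
    show "\<forall>f\<in>Brho \<rho>. P f \<in> Brho \<rho>" by (rule Pin)
    show "\<forall>f\<in>Brho \<rho>. \<forall>g\<in>Brho \<rho>. \<forall>a b. P (\<lambda>x. a * f x + b * g x) = (\<lambda>x. a * P f x + b * P g x)"
    proof (intro ballI allI)
      fix f g a b assume f: "f \<in> Brho \<rho>" and g: "g \<in> Brho \<rho>"
      have "P (\<lambda>x. a * f x + b * g x) = (\<lambda>x. a * f x + b * g x) \<circ> \<psi>" by (rule Peq[OF Brho_lin[OF f g]])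
      thus "P (\<lambda>x. a * f x + b * g x) = (\<lambda>x. a * P f x + b * P g x)" using Peq[OF f] Peq[OF g] by (simp add: o_def)
    qed
    show "\<forall>f\<in>Brho \<rho>. \<forall>\<epsilon>>0. \<exists>\<delta>>0. \<forall>g\<in>Brho \<rho>.
        wnorm \<rho> (\<lambda>x. g x - f x) < \<delta> \<longrightarrow> wnorm \<rho> (\<lambda>x. P g x - P f x) < \<epsilon>"
    proof (intro ballI allI impI)
      fix f and e :: real assume f: "f \<in> Brho \<rho>" and e: "e > 0"
      show "\<exists>\<delta>>0. \<forall>g\<in>Brho \<rho>. wnorm \<rho> (\<lambda>x. g x - f x) < \<delta> \<longrightarrow> wnorm \<rho> (\<lambda>x. P g x - P f x) < e"
      proof (intro exI[of _ "e / C"] conjI ballI impI)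
        show "e / C > 0" using e C by simp
        fix g assume g: "g \<in> Brho \<rho>" and lt: "wnorm \<rho> (\<lambda>x. g x - f x) < e / C"
        have "(\<lambda>x. 1 * g x + (-1) * f x) \<in> Brho \<rho>" by (rule Brho_lin[OF g f])
        hence wd: "wfinite \<rho> (\<lambda>x. g x - f x)" using Brho_wfinite by simp
        let ?w = "wnorm \<rho> (\<lambda>x. g x - f x)"
        have w0: "?w \<ge> 0" by (rule wnorm_nonneg[OF wd])
        have "wnorm \<rho> (\<lambda>x. P g x - P f x) \<le> ?w * C"
        proof (rule wnorm_bound(2))
          fix z
          have "\<bar>P g z - P f z\<bar> = \<bar>g (\<psi> z) - f (\<psi> z)\<bar>" using Peq[OF f] Peq[OF g] by simp
          also have "\<dots> \<le> ?w * \<rho> (\<psi> z)" using wnorm_le[OF wd, of "\<psi> z"] by simp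
          also have "\<dots> \<le> ?w * (C * \<rho> z)" using Cb[of z] w0 by (intro mult_left_mono)
          finally show "\<bar>P g z - P f z\<bar> \<le> ?w * C * \<rho> z" by (simp add: mult.assoc)
        qed
        also have "\<dots> < e / C * C" using lt C by (intro mult_strict_right_mono)
        also have "\<dots> = e" using C by simp
        finally show "wnorm \<rho> (\<lambda>x. P g x - P f x) < e" .
      qed
    qed
    show "\<forall>n \<phi> fs. smooth_Rn n \<phi> \<and> bounded (\<phi> ` Rn n) \<and> (\<forall>i<n. fs i \<in> Brho \<rho>) \<longrightarrow>
        P (\<lambda>x. \<phi> (vec_of n (\<lambda>i. fs i x))) = (\<lambda>x. \<phi> (vec_of n (\<lambda>i. P (fs i) x)))"
    proof (intro allI impI)
      fix n \<phi> fs assume a: "smooth_Rn n \<phi> \<and> bounded (\<phi> ` Rn n) \<and> (\<forall>i<n. fs i \<in> Brho \<rho>)"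
      have pc: "continuous_on (Rn n) \<phi>" using a unfolding smooth_Rn_def
        by (metis empty_subsetI iter_partial.simps(1) list.set(1))
      obtain B where B: "\<And>v. v \<in> Rn n \<Longrightarrow> \<bar>\<phi> v\<bar> \<le> B" using a unfolding bounded_iff by force
      have fs: "\<And>i. i < n \<Longrightarrow> fs i \<in> Brho \<rho>" using a by blast
      have "P (\<lambda>x. \<phi> (vec_of n (\<lambda>i. fs i x))) = (\<lambda>x. \<phi> (vec_of n (\<lambda>i. fs i x))) \<circ> \<psi>"
        by (rule Peq[OF Brho_comp_cont[OF pc B fs]])
      also have "\<dots> = (\<lambda>x. \<phi> (vec_of n (\<lambda>i. P (fs i) x)))"
      proof
        fix x
        have "vec_of n (\<lambda>i. fs i (\<psi> x)) = vec_of n (\<lambda>i. P (fs i) x)"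
          unfolding vec_of_def using Peq[OF fs] by auto
        thus "((\<lambda>x. \<phi> (vec_of n (\<lambda>i. fs i x))) \<circ> \<psi>) x = \<phi> (vec_of n (\<lambda>i. P (fs i) x))" by simp
      qed
      finally show "P (\<lambda>x. \<phi> (vec_of n (\<lambda>i. fs i x))) = (\<lambda>x. \<phi> (vec_of n (\<lambda>i. P (fs i) x)))" .
    qed
  qed
qed

end


theorem mainTheorem14:
  fixes \<rho> :: "'a::topological_space \<Rightarrow> real"
    and P :: "('a \<Rightarrow> real) \<Rightarrow> ('a \<Rightarrow> real)"
  assumes "completely_regular_space (euclidean :: 'a topology)"
    and "Hausdorff_space (euclidean :: 'a topology)"
    and "admissible_weight \<rho>"
    and "\<forall>f\<in>Brho \<rho>. P f \<in> Brho \<rho>"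
  shows "(smooth_op_alg_hom \<rho> P \<longleftrightarrow> (\<exists>\<psi>. composition_rep \<rho> P \<psi>))
       \<and> (smooth_op_alg_hom \<rho> P \<longrightarrow> (\<exists>!\<psi>. composition_rep \<rho> P \<psi>))"
proof -
  interpret wsp \<rho> using assms(2,3) by unfold_locales
  have fwd: "\<exists>\<psi>. composition_rep \<rho> P \<psi>" if h: "smooth_op_alg_hom \<rho> P"
  proof -
    interpret homP \<rho> P using h by unfold_locales
    show ?thesis using psi_rep[OF assms(1)] by blast
  qed
  show ?thesis
  proof (intro conjI impI iffI)
    show "\<exists>\<psi>. composition_rep \<rho> P \<psi>" if "smooth_op_alg_hom \<rho> P" using fwd[OF that] .
    show "smooth_op_alg_hom \<rho> P" if "\<exists>\<psi>. composition_rep \<rho> P \<psi>"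
      using that rep_imp_hom[OF assms(4)] by blast
    show "\<exists>!\<psi>. composition_rep \<rho> P \<psi>" if "smooth_op_alg_hom \<rho> P"
      using fwd[OF that] rep_unique[OF assms(1)] by blast
  qed
qed

end
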